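(* If $G$ is a special grid operator and $k\in\mathbb{Z}$, then $G'=\sigma^k G \sigma^k$ is a special grid operator and moreover $G'^\bullet = (-\tau)^k G^\bullet \tau^k$.
   Context: Let $\omega=e^{i\pi/4}$ and regard $\mathbb{Z}[\omega]$ as a subset of $\mathbb{R}^2\cong\mathbb{C}$. A grid operator is a real linear operator $G:\mathbb{R}^2\to\mathbb{R}^2$ with $G(\mathbb{Z}[\omega])\subseteq\mathbb{Z}[\omega]$; it is special if it has determinant $\pm 1$. The map $(-)^\bullet$ is $\sqrt2$-conjugation, the automorphism of $\mathbb{Z}[\omega]$ sending $a_0+a_1\omega+a_2\omega^2+a_3\omega^3$ to $a_0-a_1\omega+a_2\omega^2-a_3\omega^3$ (on $\mathbb{Q}(\sqrt2)$ it sends $a+b\sqrt2$ to $a-b\sqrt2$); for a matrix $G$, $G^\bullet$ is obtained by applying $(-)^\bullet$ to each entry. Let $\lambda=1+\sqrt2$ (so $\lambda^\bullet=-\lambda^{-1}$). The shift operators are \[ \sigma = \sqrt{\lambda^{-1}}\begin{bmatrix}\lambda & 0\\ 0 & 1\end{bmatrix},\qquad \tau = \sqrt{\lambda^{-1}}\begin{bmatrix}1 & 0\\ 0 & -\lambda\end{bmatrix}. \] *)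

theory Defs
  imports "HOL-Analysis.Analysis"
begin

definition omega :: complex where
  "omega = cis (pi / 4)"

definition Zomega :: "complex set" where
  "Zomega = {of_int a0 + of_int a1 * omega + of_int a2 * omega ^ 2 + of_int a3 * omega ^ 3
             | a0 a1 a2 a3 :: int. True}"

definition c2v :: "complex \<Rightarrow> real^2" where
  "c2v z = vector [Re z, Im z]"

definition grid_operator :: "real^2^2 \<Rightarrow> bool" where
  "grid_operator G \<longleftrightarrow> (\<forall>z\<in>Zomega. \<exists>w\<in>Zomega. G *v c2v z = c2v w)"

definition special_grid_operator :: "real^2^2 \<Rightarrow> bool" where
  "special_grid_operator G \<longleftrightarrow> grid_operator G \<and> (det G = 1 \<or> det G = -1)"

text \<open>sqrt2-conjugation on Q(sqrt 2): a + b sqrt 2 \<mapsto> a - b sqrt 2 (a, b rational).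
  Outside Q(sqrt 2) it is (irrelevantly) the identity.\<close>
definition sqrt2_conj :: "real \<Rightarrow> real" where
  "sqrt2_conj x = (if \<exists>a b :: rat. x = of_rat a + of_rat b * sqrt 2
     then (THE y. \<exists>a b :: rat. x = of_rat a + of_rat b * sqrt 2 \<and> y = of_rat a - of_rat b * sqrt 2)
     else x)"

definition mat_bullet :: "real^2^2 \<Rightarrow> real^2^2" where
  "mat_bullet G = (\<chi> i j. sqrt2_conj (G $ i $ j))"

definition matpow :: "real^'n^'n \<Rightarrow> nat \<Rightarrow> real^'n^'n" where
  "matpow A n = (((**) A) ^^ n) (mat 1)"

definition matpowi :: "real^'n^'n \<Rightarrow> int \<Rightarrow> real^'n^'n" where
  "matpowi A k = (if 0 \<le> k then matpow A (nat k) else matpow (matrix_inv A) (nat (- k)))"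

definition lam :: real where
  "lam = 1 + sqrt 2"

definition sigma :: "real^2^2" where
  "sigma = sqrt (inverse lam) *\<^sub>R vector [vector [lam, 0], vector [0, 1]]"

definition tau :: "real^2^2" where
  "tau = sqrt (inverse lam) *\<^sub>R vector [vector [1, 0], vector [0, - lam]]"

end

theory Submission imports Defs "HOL-Computational_Algebra.Primes"
begin

lemma sqrt2_irr: "sqrt 2 \<notin> \<rat>"
proof
  assume "sqrt 2 \<in> \<rat>"
  then obtain m n :: nat
    where n: "n \<noteq> 0"
      and sqrt_rat: "\<bar>sqrt 2\<bar> = m / n"
      and "coprime m n" by (rule Rats_abs_nat_div_natE)
  have eq: "m\<^sup>2 = 2 * n\<^sup>2"
  proof -
    from n and sqrt_rat have "m = \<bar>sqrt 2\<bar> * n" by simp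
    then have "real (m\<^sup>2) = (sqrt 2)\<^sup>2 * n\<^sup>2" by (simp add: power_mult_distrib)
    also have "(sqrt 2)\<^sup>2 = 2" by simp
    finally show ?thesis by linarith
  qed
  have p: "prime (2::nat)" by simp
  have "2 dvd m \<and> 2 dvd n"
  proof
    from eq have "2 dvd m\<^sup>2" by simp
    with p show "2 dvd m" by (rule prime_dvd_power)
    then obtain k where "m = 2 * k" ..
    with eq have "2 * n\<^sup>2 = 2\<^sup>2 * k\<^sup>2" by algebra
    then have "n\<^sup>2 = 2 * k\<^sup>2" by (simp add: power2_eq_square)
    then have "2 dvd n\<^sup>2" ..
    with p show "2 dvd n" by (rule prime_dvd_power)
  qed
  then have "2 dvd gcd m n" by simp
  with \<open>coprime m n\<close> show False by simp
qed

lemma q2_unique: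
  fixes a b c d :: rat
  assumes "of_rat a + of_rat b * sqrt 2 = of_rat c + of_rat d * sqrt 2"
  shows "a = c \<and> b = d"
proof (cases "b = d")
  case True then show ?thesis using assms by simp
next
  case False
  have "of_rat (b - d) * sqrt 2 = of_rat (c - a)" using assms by (simp add: of_rat_diff algebra_simps)
  then have "sqrt 2 = of_rat ((c - a) / (b - d))" using False by (simp add: of_rat_divide field_simps)
  then have "sqrt 2 \<in> \<rat>" by (metis Rats_of_rat)
  then show ?thesis using sqrt2_irr by blast
qed

definition Q2 :: "real set" where "Q2 = {of_rat a + of_rat b * sqrt 2 | a b. True}"

lemma conj_eq: "sqrt2_conj (of_rat a + of_rat b * sqrt 2) = of_rat a - of_rat b * sqrt 2"
  unfolding sqrt2_conj_def
proof (subst if_P, blast, rule the_equality)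
  show "\<exists>aa ba. of_rat a + of_rat b * sqrt 2 = of_rat aa + of_rat ba * sqrt 2 \<and>
      of_rat a - of_rat b * sqrt 2 = of_rat aa - of_rat ba * sqrt 2" by blast
next
  fix y assume "\<exists>aa ba. of_rat a + of_rat b * sqrt 2 = of_rat aa + of_rat ba * sqrt 2 \<and> y = of_rat aa - of_rat ba * sqrt 2"
  then obtain c d where "of_rat a + of_rat b * sqrt 2 = of_rat c + of_rat d * sqrt 2" "y = of_rat c - of_rat d * sqrt 2" by blast
  then show "y = of_rat a - of_rat b * sqrt 2" using q2_unique by blast
qed

lemma Q2_mult: "x \<in> Q2 \<Longrightarrow> y \<in> Q2 \<Longrightarrow> x * y \<in> Q2 \<and> sqrt2_conj (x*y) = sqrt2_conj x * sqrt2_conj y"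
proof -
  assume "x \<in> Q2" "y \<in> Q2"
  then obtain a b c d where x: "x = of_rat a + of_rat b * sqrt 2" and y: "y = of_rat c + of_rat d * sqrt 2"
    unfolding Q2_def by blast
  have s: "sqrt 2 * sqrt 2 = 2" by simp
  have e: "x * y = of_rat (a*c + 2*b*d) + of_rat (a*d + b*c) * sqrt 2"
    unfolding x y by (simp add: of_rat_add of_rat_mult algebra_simps s)
  have e2: "(of_rat a - of_rat b * sqrt 2) * (of_rat c - of_rat d * sqrt 2) = of_rat (a*c + 2*b*d) - of_rat (a*d + b*c) * sqrt 2"
    by (simp add: of_rat_add of_rat_mult algebra_simps s)
  have "sqrt2_conj (x*y) = sqrt2_conj x * sqrt2_conj y"
  proof -
    have "sqrt2_conj (x*y) = of_rat (a*c + 2*b*d) - of_rat (a*d + b*c) * sqrt 2"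
      by (simp only: e conj_eq)
    also have "\<dots> = sqrt2_conj x * sqrt2_conj y" by (simp only: e2[symmetric] x y conj_eq)
    finally show ?thesis .
  qed
  then show ?thesis unfolding Q2_def e by blast
qed

lemma Q2_lam: "lam \<in> Q2" "sqrt2_conj lam = 1 - sqrt 2"
  using conj_eq[of 1 1] unfolding lam_def Q2_def by auto (metis of_rat_1 mult_1)

lemma Q2_laminv: "sqrt 2 - 1 \<in> Q2" "sqrt2_conj (sqrt 2 - 1) = - 1 - sqrt 2"
  using conj_eq[of "-1" 1] unfolding Q2_def by (auto simp: of_rat_minus) (metis of_rat_1 of_rat_minus mult_1 add.commute diff_conv_add_uminus)


lemma lam_inv: "inverse lam = sqrt 2 - 1"
proof -
  have "lam * (sqrt 2 - 1) = 1" unfolding lam_def by (simp add: algebra_simps)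
  then show ?thesis by (metis inverse_unique)
qed

lemma om_inv: "inverse (1 - sqrt 2) = - 1 - sqrt 2"
proof -
  have "(1 - sqrt 2) * (- 1 - sqrt 2) = 1" by (simp add: algebra_simps)
  then show ?thesis by (metis inverse_unique)
qed

lemma conj_pow_nat:
  assumes "x \<in> Q2" "c \<in> Q2"
  shows "c ^ n * x \<in> Q2 \<and> sqrt2_conj (c ^ n * x) = sqrt2_conj c ^ n * sqrt2_conj x"
proof (induction n)
  case 0 then show ?case using assms by simp
next
  case (Suc n)
  have "c ^ Suc n * x = c * (c ^ n * x)" by simp
  then show ?case using Q2_mult[OF assms(2), of "c^n*x"] Suc by (simp add: mult.assoc)
qed

lemma conj_lampow:
  assumes "x \<in> Q2"
  shows "lam powi k * x \<in> Q2 \<and> sqrt2_conj (lam powi k * x) = (1 - sqrt 2) powi k * sqrt2_conj x"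
proof (cases "k \<ge> 0")
  case True
  then obtain n where k: "k = int n" by (metis nonneg_eq_int)
  show ?thesis unfolding k power_int_of_nat using conj_pow_nat[OF assms Q2_lam(1)] Q2_lam(2) by simp
next
  case False
  then obtain n where k: "k = - int n" by (metis neg_int_cases less_le not_le minus_minus)
  have a: "lam powi k = (sqrt 2 - 1) ^ n" unfolding k power_int_minus power_int_of_nat
    by (simp add: lam_inv[symmetric] power_inverse)
  have b: "(1 - sqrt 2) powi k = (- 1 - sqrt 2) ^ n" unfolding k power_int_minus power_int_of_nat
    by (simp add: om_inv[symmetric] power_inverse)
  show ?thesis unfolding a b using conj_pow_nat[OF assms Q2_laminv(1)] Q2_laminv(2) by simp
qed


definition diag2 :: "real \<Rightarrow> real \<Rightarrow> real^2^2" where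
  "diag2 p q = (\<chi> i j. if i = j then (if i = 1 then p else q) else 0)"

lemma two_ne: "(1::2) \<noteq> 2" by simp

lemma diag2_mult: "diag2 a b ** diag2 c d = diag2 (a*c) (b*d)"
  by (simp add: vec_eq_iff matrix_matrix_mult_def sum_2 forall_2 diag2_def)

lemma mat1_diag2: "mat 1 = diag2 1 1"
  by (simp add: vec_eq_iff mat_def forall_2 diag2_def)

lemma matpow_diag2: "matpow (diag2 a b) n = diag2 (a^n) (b^n)"
  by (induction n) (simp_all add: matpow_def mat1_diag2 diag2_mult)

lemma matrix_inv_unique2:
  fixes A B :: "real^2^2"
  assumes "A ** B = mat 1" "B ** A = mat 1"
  shows "matrix_inv A = B"
  unfolding matrix_inv_def
proof (rule some_equality)
  show "A ** B = mat 1 \<and> B ** A = mat 1" using assms by blast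
next
  fix C assume "A ** C = mat 1 \<and> C ** A = mat 1"
  then have "C = C ** (A ** B)" using assms by (simp add: matrix_mul_rid)
  also have "\<dots> = (C ** A) ** B" by (simp add: matrix_mul_assoc)
  finally show "C = B" using \<open>A ** C = mat 1 \<and> C ** A = mat 1\<close> by (simp add: matrix_mul_lid)
qed

lemma matrix_inv_diag2: "a \<noteq> 0 \<Longrightarrow> b \<noteq> 0 \<Longrightarrow> matrix_inv (diag2 a b) = diag2 (inverse a) (inverse b)"
  by (rule matrix_inv_unique2) (simp_all add: diag2_mult mat1_diag2)

lemma matpowi_diag2: "a \<noteq> 0 \<Longrightarrow> b \<noteq> 0 \<Longrightarrow> matpowi (diag2 a b) k = diag2 (a powi k) (b powi k)"
proof (cases "k \<ge> 0")
  case True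
  then obtain n where k: "k = int n" by (metis nonneg_eq_int)
  then show ?thesis unfolding matpowi_def by (simp add: matpow_diag2)
next
  case False
  assume ab: "a \<noteq> 0" "b \<noteq> 0"
  from False obtain n where k: "k = - int n" "n > 0" by (metis neg_int_cases less_le not_le minus_minus of_nat_0_less_iff neg_0_less_iff_less)
  then show ?thesis unfolding matpowi_def using ab False
    by (simp add: matpow_diag2 matrix_inv_diag2 power_int_minus power_inverse)
qed

lemma sandwich: "diag2 p q ** G ** diag2 r t = (\<chi> i j. (if i=1 then p else q) * G$i$j * (if j=1 then r else t))"
  by (simp add: vec_eq_iff matrix_matrix_mult_def sum_2 forall_2 diag2_def)

definition s0 :: real where "s0 = sqrt (inverse lam)"

lemma lam_pos: "lam > 0" unfolding lam_def by (simp add: add_pos_nonneg)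
lemma s0_pos: "s0 > 0" unfolding s0_def using lam_pos by simp
lemma s0_sq: "s0 * s0 = inverse lam" unfolding s0_def using lam_pos by simp

lemma sigma_diag: "sigma = diag2 (s0 * lam) s0"
  by (simp add: vec_eq_iff forall_2 diag2_def sigma_def s0_def)
lemma tau_diag: "tau = diag2 s0 (- s0 * lam)"
  by (simp add: vec_eq_iff forall_2 diag2_def tau_def s0_def)
lemma mtau_diag: "- tau = diag2 (- s0) (s0 * lam)"
  by (simp add: vec_eq_iff forall_2 diag2_def tau_def s0_def)


abbreviation r2 :: real where "r2 \<equiv> sqrt 2 / 2"

definition inL :: "real^2 \<Rightarrow> bool" where
  "inL v \<longleftrightarrow> (\<exists>(x::int) (y::int) (p::int) (q::int). v$1 = x + p * r2 \<and> v$2 = y + q * r2 \<and> even (p + q))"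

lemma omega_eq: "omega = Complex r2 r2" "omega^2 = \<i>" "omega^3 = Complex (- r2) r2"
proof -
  show o: "omega = Complex r2 r2" unfolding omega_def cis.ctr by (simp add: cos_45 sin_45)
  have s: "r2 * r2 = 1/2" by (simp add: field_simps)
  show "omega^2 = \<i>" unfolding o power2_eq_square by (simp add: complex_eq_iff s)
  then show "omega^3 = Complex (- r2) r2" unfolding o by (simp add: power3_eq_cube power2_eq_square complex_eq_iff)
qed

lemma Re_om: "Re omega = r2" "Im omega = r2" "Re (omega^2) = 0" "Im (omega^2) = 1"
  "Re (omega^3) = - r2" "Im (omega^3) = r2"
proof -
  show "Re omega = r2" "Im omega = r2" by (simp_all only: omega_eq(1) complex.sel)
  show "Re (omega^2) = 0" "Im (omega^2) = 1" by (simp_all only: omega_eq(2)) simp_all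
  show "Re (omega^3) = - r2" "Im (omega^3) = r2" by (simp_all only: omega_eq(3) complex.sel)
qed

lemma c2v_nth: "c2v w $ 1 = Re w" "c2v w $ 2 = Im w" unfolding c2v_def by simp_all

lemma Zomega_inL: "(\<exists>w\<in>Zomega. v = c2v w) \<longleftrightarrow> inL v"
proof
  assume "\<exists>w\<in>Zomega. v = c2v w"
  then obtain a0 a1 a2 a3 :: int where v: "v = c2v (of_int a0 + of_int a1 * omega + of_int a2 * omega ^ 2 + of_int a3 * omega ^ 3)"
    unfolding Zomega_def by blast
  have "v$1 = a0 + (a1 - a3) * r2" "v$2 = a2 + (a1 + a3) * r2"
    unfolding v c2v_nth by (simp_all add: Re_om field_simps)
  moreover have "even ((a1 - a3) + (a1 + a3))" by simp
  ultimately show "inL v" unfolding inL_def by blast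
next
  assume "inL v"
  then obtain x y p q :: int where h: "v$1 = x + p * r2" "v$2 = y + q * r2" "even (p + q)"
    unfolding inL_def by blast
  obtain m where m: "p + q = 2 * m" using h(3) by (metis evenE)
  define a1 where "a1 = m"
  define a3 where "a3 = m - p"
  have e1: "a1 - a3 = p" "a1 + a3 = q" using m unfolding a1_def a3_def by auto
  have e1': "real_of_int a1 - real_of_int a3 = p" "real_of_int a1 + real_of_int a3 = q"
    using e1 by (metis of_int_diff, metis of_int_add)
  let ?w = "of_int x + of_int a1 * omega + of_int y * omega ^ 2 + of_int a3 * omega ^ 3"
  have "?w \<in> Zomega" unfolding Zomega_def by blast
  moreover have "v = c2v ?w"
  proof -
    have "Re ?w = x + (real_of_int a1 - real_of_int a3) * r2" "Im ?w = y + (real_of_int a1 + real_of_int a3) * r2"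
      by (simp_all add: Re_om field_simps)
    then show ?thesis using h e1' by (simp add: vec_eq_iff forall_2 c2v_nth)
  qed
  ultimately show "\<exists>w\<in>Zomega. v = c2v w" by blast
qed

lemma grid_iff: "grid_operator G \<longleftrightarrow> (\<forall>v. inL v \<longrightarrow> inL (G *v v))"
  unfolding grid_operator_def
proof safe
  fix v assume H: "\<forall>z\<in>Zomega. \<exists>w\<in>Zomega. G *v c2v z = c2v w" and "inL v"
  then obtain z where "z \<in> Zomega" "v = c2v z" using Zomega_inL by metis
  then show "inL (G *v v)" using H Zomega_inL by metis
next
  fix z assume H: "\<forall>v. inL v \<longrightarrow> inL (G *v v)" and "z \<in> Zomega"
  then have "inL (c2v z)" using Zomega_inL by blast
  then show "\<exists>w\<in>Zomega. G *v c2v z = c2v w" using H Zomega_inL by metis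
qed

definition good :: "real \<Rightarrow> bool" where
  "good c \<longleftrightarrow> (\<forall>(x::int) (p::int). \<exists>(x'::int) (p'::int). c * (x + p * r2) = x' + p' * r2 \<and> even (p' - p))"

lemma good_1: "good 1" unfolding good_def by auto

lemma good_mult:
  assumes A: "good a" and B: "good b" shows "good (a * b)"
  unfolding good_def
proof (intro allI)
  fix x p :: int
  obtain x1 p1 :: int where 1: "b * (x + p * r2) = x1 + p1 * r2" "even (p1 - p)" using B unfolding good_def by blast
  obtain x2 p2 :: int where 2: "a * (x1 + p1 * r2) = x2 + p2 * r2" "even (p2 - p1)" using A unfolding good_def by blast
  have "a * b * (x + p * r2) = x2 + p2 * r2" using 1 2 by (simp add: mult.assoc)
  moreover have "even (p2 - p)" using 1(2) 2(2) by (metis diff_add_cancel even_add add.commute)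
  ultimately show "\<exists>(x'::int) (p'::int). a * b * (x + p * r2) = x' + p' * r2 \<and> even (p' - p)" by blast
qed

lemma good_lam: "good lam"
  unfolding good_def
proof (intro allI)
  fix x p :: int
  have "lam * (x + p * r2) = (x + p) + (p + 2 * x) * r2" unfolding lam_def by (simp add: algebra_simps)
  then show "\<exists>(x'::int) (p'::int). lam * (x + p * r2) = x' + p' * r2 \<and> even (p' - p)"
    by (intro exI[of _ "x + p"] exI[of _ "p + 2*x"]) simp
qed

lemma good_laminv: "good (sqrt 2 - 1)"
  unfolding good_def
proof (intro allI)
  fix x p :: int
  have "(sqrt 2 - 1) * (x + p * r2) = (p - x) + (2 * x - p) * r2" by (simp add: field_simps)
  then show "\<exists>(x'::int) (p'::int). (sqrt 2 - 1) * (x + p * r2) = x' + p' * r2 \<and> even (p' - p)"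
    by (intro exI[of _ "p - x"] exI[of _ "2*x - p"]) simp
qed

lemma good_pow: "good c \<Longrightarrow> good (c ^ n)"
  by (induction n) (simp_all add: good_1 good_mult)

lemma good_lampow: "good (lam powi k)"
proof (cases "k \<ge> 0")
  case True
  then obtain n where k: "k = int n" by (metis nonneg_eq_int)
  show ?thesis unfolding k power_int_of_nat by (rule good_pow[OF good_lam])
next
  case False
  then obtain n where k: "k = - int n" by (metis neg_int_cases less_le not_le minus_minus)
  have a: "lam powi k = (sqrt 2 - 1) ^ n" unfolding k power_int_minus power_int_of_nat
    by (simp add: lam_inv[symmetric] power_inverse)
  show ?thesis unfolding a by (rule good_pow[OF good_laminv])
qed

definition sc :: "2 \<Rightarrow> real \<Rightarrow> real^2 \<Rightarrow> real^2" where
  "sc j c v = (\<chi> i. if i = j then c * v$i else v$i)"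

lemma inL_sc: assumes "good c" "inL v" shows "inL (sc 1 c v)" "inL (sc 2 c v)"
proof -
  obtain x y p q :: int where h: "v$1 = x + p * r2" "v$2 = y + q * r2" "even (p + q)"
    using assms(2) unfolding inL_def by blast
  obtain x' p' :: int where 1: "c * (x + p * r2) = of_int x' + of_int p' * r2" "even (p' - p)" using assms(1) unfolding good_def by blast
  obtain y' q' :: int where 2: "c * (y + q * r2) = of_int y' + of_int q' * r2" "even (q' - q)" using assms(1) unfolding good_def by blast
  have "even (p' + q)" using 1(2) h(3) by (metis add_diff_cancel_left' even_add diff_add_cancel add.commute)
  then show "inL (sc 1 c v)" unfolding inL_def sc_def using h 1 by (intro exI[of _ x'] exI[of _ y] exI[of _ p'] exI[of _ q]) simp
  have "even (p + q')" using 2(2) h(3) by (metis add_diff_cancel_left' even_add diff_add_cancel add.commute)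
  then show "inL (sc 2 c v)" unfolding inL_def sc_def using h 2 by (intro exI[of _ x] exI[of _ y'] exI[of _ p] exI[of _ q']) simp
qed

lemma inL_Q2: "inL v \<Longrightarrow> v$1 \<in> Q2 \<and> v$2 \<in> Q2"
proof -
  assume "inL v"
  then obtain x y p q :: int where h: "v$1 = x + p * r2" "v$2 = y + q * r2"
    unfolding inL_def by blast
  have "v$1 = of_rat (of_int x) + of_rat (of_int p / 2) * sqrt 2" "v$2 = of_rat (of_int y) + of_rat (of_int q / 2) * sqrt 2"
    using h by (simp_all add: of_rat_divide)
  then show ?thesis unfolding Q2_def by blast
qed


lemma entries_Q2:
  assumes "grid_operator G" shows "G$i$j \<in> Q2"
proof -
  have g: "\<forall>v. inL v \<longrightarrow> inL (G *v v)" using assms grid_iff by blast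
  have u1: "inL (\<chi> i. if i = 1 then 1 else 0)" unfolding inL_def
    by (rule exI[of _ 1], rule exI[of _ 0], rule exI[of _ 0], rule exI[of _ 0]) simp
  have u2: "inL (\<chi> i. if i = 1 then 0 else 1)" unfolding inL_def
    by (rule exI[of _ 0], rule exI[of _ 1], rule exI[of _ 0], rule exI[of _ 0]) simp
  have a: "(G *v (\<chi> i. if i = 1 then 1 else 0)) $ i = G$i$1" for i
    by (simp add: matrix_vector_mult_def sum_2)
  have b: "(G *v (\<chi> i. if i = 1 then 0 else 1)) $ i = G$i$2" for i
    by (simp add: matrix_vector_mult_def sum_2)
  have "G$i$1 \<in> Q2 \<and> G$i$2 \<in> Q2"
    using inL_Q2[OF g[rule_format, OF u1]] inL_Q2[OF g[rule_format, OF u2]] a b exhaust_2[of i] by metis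
  then show ?thesis using exhaust_2[of j] by metis
qed

theorem lemma5p42:
  fixes G :: "real^2^2" and k :: int
  assumes "special_grid_operator G"
  shows "special_grid_operator (matpowi sigma k ** G ** matpowi sigma k)
     \<and> mat_bullet (matpowi sigma k ** G ** matpowi sigma k)
         = matpowi (- tau) k ** mat_bullet G ** matpowi tau k"
proof -
  have gG: "grid_operator G" and dG: "det G = 1 \<or> det G = -1"
    using assms unfolding special_grid_operator_def by auto
  define e1 where "e1 = (s0 * lam) powi k"
  define e2 where "e2 = s0 powi k"
  define L where "L = lam powi k"
  define Li where "Li = lam powi (-k)"
  have sp: "s0 \<noteq> 0" "s0 * lam \<noteq> 0" "- s0 \<noteq> 0" "- s0 * lam \<noteq> 0" using s0_pos lam_pos by auto
  have LLi: "L * Li = 1" unfolding L_def Li_def using lam_pos by (simp add: power_int_minus)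
  have LLi': "L * (Li * x) = x" "Li * (L * x) = x" for x using LLi by (simp_all add: mult.assoc[symmetric] mult.commute[of Li])
  have ee1: "e1 * e1 = L" unfolding e1_def L_def power_int_mult_distrib[symmetric]
  proof -
    have h: "s0 * lam * (s0 * lam) = lam" using s0_sq lam_pos by (simp add: field_simps)
    show "(s0 * lam * (s0 * lam)) powi k = lam powi k" by (simp only: h)
  qed
  have ee2: "e1 * e2 = 1" "e2 * e1 = 1" unfolding e1_def e2_def power_int_mult_distrib[symmetric]
  proof -
    have h: "s0 * lam * s0 = 1" "s0 * (s0 * lam) = 1" using s0_sq lam_pos by (simp_all add: field_simps)
    show "(s0 * lam * s0) powi k = 1" "(s0 * (s0 * lam)) powi k = 1" by (simp_all only: h power_int_1_left)
  qed
  have ee3: "e2 * e2 = Li" unfolding e2_def Li_def power_int_mult_distrib[symmetric] s0_sq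
    by (simp add: power_int_minus power_int_inverse)
  define G' where "G' = matpowi sigma k ** G ** matpowi sigma k"
  have G'e: "G' = (\<chi> i j. (if i=1 then e1 else e2) * G$i$j * (if j=1 then e1 else e2))"
    unfolding G'_def sigma_diag matpowi_diag2[OF sp(2) sp(1)] sandwich e1_def e2_def ..
  have G11: "G'$1$1 = L * G$1$1" using ee1 unfolding G'e by (simp add: algebra_simps)
  have G12: "G'$1$2 = G$1$2" using ee2 unfolding G'e by (simp add: algebra_simps)
  have G21: "G'$2$1 = G$2$1" using ee2 unfolding G'e by (simp add: algebra_simps)
  have G22: "G'$2$2 = Li * G$2$2" using ee3 unfolding G'e by (simp add: algebra_simps)
  have detG': "det G' = det G" unfolding det_2 G11 G12 G21 G22
    using LLi by (simp add: algebra_simps)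
  have act: "G' *v v = sc 2 Li (sc 1 Li (sc 1 L (G *v sc 1 L v)))" for v
    using LLi by (simp add: LLi' vec_eq_iff forall_2 matrix_vector_mult_def sum_2 sc_def G11 G12 G21 G22 algebra_simps)
  have grid': "grid_operator G'" unfolding grid_iff
  proof (intro allI impI)
    fix v assume "inL v"
    have gL: "good L" "good Li" unfolding L_def Li_def by (rule good_lampow)+
    have "inL (G *v sc 1 L v)" using gG grid_iff inL_sc(1)[OF gL(1) \<open>inL v\<close>] by blast
    then show "inL (G' *v v)" unfolding act using inL_sc gL by blast
  qed
  have Q: "G$i$j \<in> Q2" for i j using entries_Q2[OF gG] .
  have f11: "(- s0) powi k * s0 powi k = (1 - sqrt 2) powi k"
  proof -
    have h: "- s0 * s0 = 1 - sqrt 2" using s0_sq lam_inv by simp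
    show ?thesis by (simp only: power_int_mult_distrib[symmetric] h)
  qed
  have f12: "(- s0) powi k * (- s0 * lam) powi k = 1"
  proof -
    have h: "- s0 * (- s0 * lam) = 1" using s0_sq lam_pos by (simp add: field_simps)
    show ?thesis by (simp only: power_int_mult_distrib[symmetric] h power_int_1_left)
  qed
  have f21: "(s0 * lam) powi k * s0 powi k = 1" using ee2(1) unfolding e1_def e2_def .
  have f22: "(s0 * lam) powi k * (- s0 * lam) powi k = (1 - sqrt 2) powi (- k)"
  proof -
    have h: "s0 * lam * (- s0 * lam) = - lam" using s0_sq lam_pos by (simp add: field_simps)
    moreover have "(1 - sqrt 2) powi (- k) = (- lam) powi k"
      unfolding power_int_minus power_int_inverse[symmetric] om_inv lam_def by simp
    ultimately show ?thesis by (simp only: power_int_mult_distrib[symmetric])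
  qed
  have g11: "s0 powi k * (- s0) powi k = (1 - sqrt 2) powi k" using f11 by (simp add: mult.commute)
  have g12: "(- s0) powi k * (- (s0 * lam)) powi k = 1" using f12 by simp
  have g21: "s0 powi k * (s0 * lam) powi k = 1" using f21 by (simp add: mult.commute)
  have g22: "(s0 * lam) powi k * (- (s0 * lam)) powi k = (1 - sqrt 2) powi (- k)" using f22 by simp
  have c11: "sqrt2_conj (G'$1$1) = (1 - sqrt 2) powi k * sqrt2_conj (G$1$1)"
    unfolding G11 L_def using conj_lampow[OF Q] by blast
  have c22: "sqrt2_conj (G'$2$2) = (1 - sqrt 2) powi (-k) * sqrt2_conj (G$2$2)"
    unfolding G22 Li_def using conj_lampow[OF Q] by blast
  have bul: "mat_bullet G' = matpowi (- tau) k ** mat_bullet G ** matpowi tau k"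
    unfolding mtau_diag unfolding tau_diag matpowi_diag2[OF sp(3) sp(2)] matpowi_diag2[OF sp(1) sp(4)] sandwich
    using g11 g12 g21 g22 by (simp add: vec_eq_iff forall_2 mat_bullet_def c11 c22 G12 G21 algebra_simps)
  show ?thesis using grid' detG' dG bul unfolding G'_def special_grid_operator_def by simp
qed

end
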